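(* Let $L>0$, $D>0$, $\alpha\in[0,1]$, $\tau_{\rm acc}>0$, $\tau_{\rm m}>0$, $h_{\rm m}>0$, $\bar h_{\rm acc}>0$, and let $\tau_{\rm mix}$, $\bar h_{\rm mix}$, $\bar\rho$, $\bar v$ and $c_1,c_2,c_3,c_4$ be as defined in the context (with $\bar\rho,\bar v>0$). Consider, for $x\in[0,D]$, $t\ge0$, the open-loop system (i.e. with $\tilde h_{\rm acc}\equiv 0$) $$\tilde z_t(x,t)+\bar v\,\tilde z_x(x,t)=0,\qquad \tilde v_t(x,t)-c_4\tilde v_x(x,t)=-c_1e^{-\frac{c_2x}{\bar v}}\tilde z(x,t),$$ $$\tilde z(0,t)=-L\frac{\bar\rho^2}{\bar v}\tilde v(0,t),\qquad \tilde v_t(D,t)=-c_1e^{-\frac{c_2D}{\bar v}}\tilde z(D,t).$$ This system is exponentially unstable: there exist a real number $\sigma>0$ and a nontrivial pair of functions $(\phi,\psi)$ on $[0,D]$ such that $\tilde z(x,t)=e^{\sigma t}\phi(x)$, $\tilde v(x,t)=e^{\sigma t}\psi(x)$ is a solution.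
   Context: Definitions: $\tau_{\rm mix}=\left(\frac{\alpha}{\tau_{\rm acc}}+\frac{1-\alpha}{\tau_{\rm m}}\right)^{-1}$; $\bar h_{\rm mix}=\frac{\alpha+(1-\alpha)\frac{\tau_{\rm acc}}{\tau_{\rm m}}}{\alpha+(1-\alpha)\frac{\tau_{\rm acc}}{\tau_{\rm m}}\frac{\bar h_{\rm acc}}{h_{\rm m}}}\bar h_{\rm acc}$. Given a constant inflow $q_{\rm in}>0$ with $q_{\rm in}\bar h_{\rm mix}<1$, the equilibrium values are $\bar v=\frac{L}{\frac{1}{q_{\rm in}}-\bar h_{\rm mix}}$ and $\bar\rho=\frac{q_{\rm in}}{\bar v}$, so that $\bar v=q_{\rm in}/\bar\rho$ and $\frac1{\bar\rho}-L=\bar h_{\rm mix}\bar v$. Constants: $c_1=\frac{1}{\bar\rho^2\tau_{\rm mix}\bar h_{\rm mix}}$, $c_2=\frac{1}{\tau_{\rm mix}}$, $c_3=\frac{\alpha}{\tau_{\rm acc}\bar h_{\rm acc}^2}\left(\frac1{\bar\rho}-L\right)$, $c_4=\frac{L}{\bar h_{\rm mix}}$. (This system is the diagonalized linearization, around a uniform congested equilibrium, of an Aw–Rascle–Zhang-type traffic model in which $\tilde h_{\rm acc}$ is the deviation of the time-gap of ACC-equipped vehicles; $\tilde z=e^{c_2x/\bar v}(\tilde\rho+\bar h_{\rm mix}\bar\rho^2\tilde v)$.) *)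

theory Defs
  imports "HOL-Analysis.Analysis"
begin

definition tau_mix :: "real \<Rightarrow> real \<Rightarrow> real \<Rightarrow> real" where
  "tau_mix \<alpha> \<tau>acc \<tau>m = inverse (\<alpha> / \<tau>acc + (1 - \<alpha>) / \<tau>m)"

definition h_mix :: "real \<Rightarrow> real \<Rightarrow> real \<Rightarrow> real \<Rightarrow> real \<Rightarrow> real" where
  "h_mix \<alpha> \<tau>acc \<tau>m hm hacc =
     (\<alpha> + (1 - \<alpha>) * (\<tau>acc / \<tau>m)) /
     (\<alpha> + (1 - \<alpha>) * (\<tau>acc / \<tau>m) * (hacc / hm)) * hacc"

definition v_bar :: "real \<Rightarrow> real \<Rightarrow> real \<Rightarrow> real" where
  "v_bar L qin hmix = L / (1 / qin - hmix)"

definition rho_bar :: "real \<Rightarrow> real \<Rightarrow> real" where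
  "rho_bar qin vbar = qin / vbar"

definition c1 :: "real \<Rightarrow> real \<Rightarrow> real \<Rightarrow> real" where
  "c1 rho taumix hmix = 1 / (rho ^ 2 * taumix * hmix)"

definition c2 :: "real \<Rightarrow> real" where
  "c2 taumix = 1 / taumix"

definition c3 :: "real \<Rightarrow> real \<Rightarrow> real \<Rightarrow> real \<Rightarrow> real \<Rightarrow> real" where
  "c3 \<alpha> \<tau>acc hacc rho L = \<alpha> / (\<tau>acc * hacc ^ 2) * (1 / rho - L)"

definition c4 :: "real \<Rightarrow> real \<Rightarrow> real" where
  "c4 L hmix = L / hmix"

end

theory Submission
  imports Defs
begin

lemma root_ex:
  fixes P c2 c4 vb D :: real
  assumes P: "P > 0" and c2: "c2 > 0" and c4: "c4 > 0" and vb: "vb > 0" and D: "D > 0"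
  defines "g \<equiv> (\<lambda>s. P / (s + c4 * ((c2 + s) / vb)) *
      (1 + c4 * ((c2 + s) / vb) / s * exp (- ((c2 + s) / vb) * D - s * D / c4)))"
  shows "\<exists>s>0. g s = 1"
proof -
  define a where "a = c2 / vb"
  have a: "a > 0" using c2 vb by (simp add: a_def)
  define E0 where "E0 = exp (- (a + 1/vb + 1/c4) * D)"
  have E0: "E0 > 0" by (simp add: E0_def)
  define s0 where "s0 = min 1 (min (c4 * a) (P * E0 / 4))"
  have s0: "s0 > 0" using a c4 P E0 by (simp add: s0_def)
  have upper: "g s \<le> P / s" if s: "s > 0" for s
  proof -
    define k where "k = (c2 + s) / vb"
    have k: "k > 0" using c2 s vb by (simp add: k_def)
    have "0 \<le> k * D" "0 \<le> s * D / c4" using k D s c4 by auto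
    hence e: "exp (- k * D - s * D / c4) \<le> 1" by simp
    have "g s = P / (s + c4 * k) * (1 + c4 * k / s * exp (- k * D - s * D / c4))"
      by (simp add: g_def k_def)
    also have "\<dots> \<le> P / (s + c4 * k) * (1 + c4 * k / s)"
    proof -
      have "c4 * k / s * exp (- k * D - s * D / c4) \<le> c4 * k / s * 1"
        by (rule mult_left_mono[OF e]) (use k c4 s in auto)
      thus ?thesis using k c4 s P by (intro mult_left_mono) auto
    qed
    also have "\<dots> = P / s"
    proof -
      have "s + c4 * k > 0" using k c4 s by (simp add: add_pos_pos)
      moreover have "1 + c4 * k / s = (s + c4 * k) / s" using s by (simp add: field_simps)
      ultimately show ?thesis by simp
    qed
    finally show ?thesis .
  qed
  have gb: "g (2 * P) < 1"
  proof -
    have "g (2*P) \<le> P / (2*P)" using upper[of "2*P"] P by linarith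
    also have "\<dots> < 1" using P by simp
    finally show ?thesis .
  qed
  have ga: "g s0 \<ge> 1"
  proof -
    define k where "k = (c2 + s0) / vb"
    have k: "k \<ge> a" using s0 vb by (simp add: k_def a_def divide_right_mono)
    have kpos: "k > 0" using k a by linarith
    have s0le1: "s0 \<le> 1" and s0le2: "s0 \<le> c4 * a" and s0le3: "s0 \<le> P * E0 / 4"
      by (auto simp: s0_def)
    have "- (a + 1/vb + 1/c4) * D \<le> - k * D - s0 * D / c4"
    proof -
      have "k \<le> a + 1/vb" using s0le1 vb by (simp add: k_def a_def add_divide_distrib divide_right_mono)
      moreover have "s0 / c4 \<le> 1 / c4" using s0le1 c4 by (simp add: divide_right_mono)
      ultimately have "k + s0 / c4 \<le> a + 1/vb + 1/c4" by linarith
      hence "(k + s0/c4) * D \<le> (a + 1/vb + 1/c4) * D" using D by (simp add: mult_right_mono)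
      thus ?thesis by (simp add: algebra_simps)
    qed
    hence e: "E0 \<le> exp (- k * D - s0 * D / c4)" by (simp add: E0_def)
    have "g s0 = P / (s0 + c4 * k) * (1 + c4 * k / s0 * exp (- k * D - s0 * D / c4))"
      by (simp add: g_def k_def)
    also have "\<dots> \<ge> P / (2 * c4 * k) * (c4 * k / s0 * E0)"
    proof -
      have "c4 * a \<le> c4 * k" using k c4 by (simp add: mult_left_mono)
      hence "s0 + c4 * k \<le> 2 * c4 * k" using s0le2 by linarith
      hence "P / (2 * c4 * k) \<le> P / (s0 + c4 * k)" using P s0 c4 kpos
        by (intro divide_left_mono) auto
      moreover have "c4 * k / s0 * E0 \<le> 1 + c4 * k / s0 * exp (- k * D - s0 * D / c4)"
        using e c4 kpos s0 by (smt (verit) divide_pos_pos mult_left_mono mult_pos_pos)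
      ultimately show ?thesis using P c4 kpos s0 E0
        by (intro mult_mono) auto
    qed
    finally have "g s0 \<ge> P * E0 / (2 * s0)" using c4 kpos s0 by (simp add: field_simps)
    moreover have "P * E0 / (2 * s0) \<ge> 2" using s0le3 s0 by (simp add: field_simps)
    ultimately show ?thesis by linarith
  qed
  have le: "s0 \<le> 2 * P"
  proof -
    have "0 \<le> (a + 1/vb + 1/c4) * D" using a vb c4 D by simp
    hence "- (a + 1/vb + 1/c4) * D \<le> 0" by linarith
    hence "E0 \<le> 1" unfolding E0_def by (subst exp_le_one_iff) 
    hence "P * E0 \<le> P" using P by (simp add: mult_left_le)
    moreover have "s0 \<le> P * E0 / 4" by (simp add: s0_def)
    ultimately show ?thesis using P by linarith
  qed
  have cont: "\<forall>x. s0 \<le> x \<and> x \<le> 2 * P \<longrightarrow> isCont g x"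
  proof (intro allI impI)
    fix x assume "s0 \<le> x \<and> x \<le> 2 * P"
    hence x: "x > 0" using s0 by linarith
    have "x + c4 * ((c2 + x) / vb) > 0" using x c4 c2 vb by (simp add: add_pos_pos)
    thus "isCont g x" unfolding g_def using x vb c4 by (auto intro!: continuous_intros)
  qed
  obtain s where "s \<ge> s0" "s \<le> 2 * P" "g s = 1"
    using IVT2[of g "2*P" 1 s0] gb ga le cont by auto
  thus ?thesis using s0 by (intro exI[of _ s]) auto
qed

lemma aux: fixes qa qs qc qk qd qe :: real shows "qd \<noteq> 0 \<Longrightarrow> qd = qs + qc*qk \<Longrightarrow> qs*(-qa/qd)*qe + (-qa*qc*qk*qe)/qd = -qa*qe"
proof -
  assume qd: "qd \<noteq> 0" "qd = qs + qc*qk"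
  have "qs*(-qa/qd)*qe = (-qa*qe*qs)/qd" by simp
  hence "qs*(-qa/qd)*qe + (-qa*qc*qk*qe)/qd = (-qa*qe*qs + (-qa*qc*qk*qe))/qd" by (simp only: add_divide_distrib)
  also have "-qa*qe*qs + (-qa*qc*qk*qe) = (-qa*qe)*(qs + qc*qk)" by (simp only: algebra_simps)
  finally have "qs*(-qa/qd)*qe + (-qa*qc*qk*qe)/qd = (-qa*qe)*(qs + qc*qk)/qd" .
  also have "\<dots> = -qa*qe" using qd by simp
  finally show ?thesis .
qed

lemma abstract_sol:
  fixes L D rb vb c1v c2v c4v :: real
  assumes L: "L > 0" and D: "D > 0" and rb: "rb > 0" and vb: "vb > 0"
    and c1: "c1v > 0" and c2: "c2v > 0" and c4: "c4v > 0"
  shows "\<exists>\<sigma>::real. \<sigma> > 0 \<and> (\<exists>\<phi> \<psi> :: real \<Rightarrow> real.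
     (\<exists>x\<in>{0..D}. \<phi> x \<noteq> 0 \<or> \<psi> x \<noteq> 0) \<and>
     continuous_on {0..D} \<phi> \<and> continuous_on {0..D} \<psi> \<and>
     (\<forall>x\<in>{0<..<D}. \<forall>t\<ge>0. \<exists>zt zx vt vx.
        ((\<lambda>s. exp (\<sigma> * s) * \<phi> x) has_real_derivative zt) (at t within {0..}) \<and>
        ((\<lambda>y. exp (\<sigma> * t) * \<phi> y) has_real_derivative zx) (at x) \<and>
        ((\<lambda>s. exp (\<sigma> * s) * \<psi> x) has_real_derivative vt) (at t within {0..}) \<and>
        ((\<lambda>y. exp (\<sigma> * t) * \<psi> y) has_real_derivative vx) (at x) \<and>
        zt + vb * zx = 0 \<and>
        vt - c4v * vx = - c1v * exp (- c2v * x / vb) * (exp (\<sigma> * t) * \<phi> x)) \<and>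
     (\<forall>t\<ge>0. exp (\<sigma> * t) * \<phi> 0 = - L * rb ^ 2 / vb * (exp (\<sigma> * t) * \<psi> 0)) \<and>
     (\<forall>t\<ge>0. \<exists>vt.
        ((\<lambda>s. exp (\<sigma> * s) * \<psi> D) has_real_derivative vt) (at t within {0..}) \<and>
        vt = - c1v * exp (- c2v * D / vb) * (exp (\<sigma> * t) * \<phi> D)))"
proof -
  define P where "P = L * rb ^ 2 / vb * c1v"
  have P: "P > 0" using L rb vb c1 by (simp add: P_def)
  obtain \<sigma> where sp: "\<sigma> > 0" and g: "P / (\<sigma> + c4v * ((c2v + \<sigma>) / vb)) *
      (1 + c4v * ((c2v + \<sigma>) / vb) / \<sigma> * exp (- ((c2v + \<sigma>) / vb) * D - \<sigma> * D / c4v)) = 1"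
    using root_ex[OF P c2 c4 vb D] by blast
  define k where "k = (c2v + \<sigma>) / vb"
  have k: "k > 0" using c2 sp vb by (simp add: k_def)
  have den: "\<sigma> + c4v * k > 0" using sp c4 k by (simp add: add_pos_pos)
  define B where "B = - c1v / (\<sigma> + c4v * k)"
  define C where "C = - c1v * c4v * k * exp (- k * D - \<sigma> * D / c4v) / (\<sigma> * (\<sigma> + c4v * k))"
  define \<phi> where "\<phi> = (\<lambda>x::real. exp (- \<sigma> * x / vb))"
  define \<psi> where "\<psi> = (\<lambda>x::real. B * exp (- k * x) + C * exp (\<sigma> * x / c4v))"
  have g': "P / (\<sigma> + c4v * k) * (1 + c4v * k / \<sigma> * exp (- k * D - \<sigma> * D / c4v)) = 1"
    using g by (simp only: k_def)
  have ek: "exp (- c2v * x / vb) * exp (- \<sigma> * x / vb) = exp (- k * x)" for x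
    using vb by (simp add: k_def flip: exp_add) (simp add: field_simps)
  have eD: "exp (- k * D - \<sigma> * D / c4v) * exp (\<sigma> * D / c4v) = exp (- k * D)"
    by (simp flip: exp_add)
  have b0: "\<phi> 0 = - L * rb ^ 2 / vb * \<psi> 0"
  proof -
    have "B + C = - c1v / (\<sigma> + c4v * k) * (1 + c4v * k / \<sigma> * exp (- k * D - \<sigma> * D / c4v))"
    proof -
      have n1: "\<sigma> + c4v * k \<noteq> 0" "\<sigma> \<noteq> 0" "\<sigma> * \<sigma> + \<sigma> * (c4v * k) \<noteq> 0"
        using sp den mult_pos_pos[OF sp den] by (auto simp: algebra_simps)
      define E where "E = exp (- k * D - \<sigma> * D / c4v)"
      have "B + C = - c1v / (\<sigma> + c4v * k) * (1 + c4v * k / \<sigma> * E)"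
      proof -
        have "C = - c1v / (\<sigma> + c4v * k) * (c4v * k / \<sigma> * E)"
          unfolding C_def E_def[symmetric] by (simp add: divide_simps)
        thus ?thesis unfolding B_def by (simp add: distrib_left)
      qed
      thus ?thesis by (simp add: E_def)
    qed
    hence "- L * rb ^ 2 / vb * (B + C) = 1" using g' by (simp add: P_def field_simps)
    thus ?thesis by (simp add: \<phi>_def \<psi>_def)
  qed
  have bD: "\<sigma> * \<psi> D = - c1v * exp (- c2v * D / vb) * \<phi> D"
  proof -
    have "\<sigma> * \<psi> D = \<sigma> * B * exp (- k * D) + \<sigma> * C * exp (\<sigma> * D / c4v)"
      by (simp add: \<psi>_def algebra_simps)
    also have "\<sigma> * C * exp (\<sigma> * D / c4v) = - c1v * c4v * k * exp (- k * D) / (\<sigma> + c4v * k)"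
    proof -
      have "\<sigma> * C = - c1v * c4v * k * exp (- k * D - \<sigma> * D / c4v) / (\<sigma> + c4v * k)"
        unfolding C_def using sp by simp
      hence "\<sigma> * C * exp (\<sigma> * D / c4v) = - c1v * c4v * k * (exp (- k * D - \<sigma> * D / c4v) * exp (\<sigma> * D / c4v)) / (\<sigma> + c4v * k)"
        by simp
      thus ?thesis using eD by simp
    qed
    also have "\<sigma> * B * exp (- k * D) + - c1v * c4v * k * exp (- k * D) / (\<sigma> + c4v * k)
        = - c1v * exp (- k * D)"
      unfolding B_def using aux[where qa=c1v and qs=\<sigma> and qc=c4v and qk=k and qd="\<sigma> + c4v * k" and qe="exp (- k * D)"] den by simp
    also have "\<dots> = - c1v * exp (- c2v * D / vb) * \<phi> D"
      using ek[of D] by (simp add: \<phi>_def)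
    finally show ?thesis .
  qed
  have h1: "\<exists>x\<in>{0..D}. \<phi> x \<noteq> 0 \<or> \<psi> x \<noteq> 0"
    using D by (intro bexI[of _ 0]) (auto simp: \<phi>_def)
  have h2: "continuous_on {0..D} \<phi>" unfolding \<phi>_def using vb by (auto intro!: continuous_intros)
  have h3: "continuous_on {0..D} \<psi>" unfolding \<psi>_def using c4 by (auto intro!: continuous_intros)
  have h5: "\<forall>t\<ge>0. exp (\<sigma> * t) * \<phi> 0 = - L * rb ^ 2 / vb * (exp (\<sigma> * t) * \<psi> 0)"
    using b0 by simp
  have h6: "\<forall>t\<ge>0. \<exists>vt. ((\<lambda>s. exp (\<sigma> * s) * \<psi> D) has_real_derivative vt) (at t within {0..}) \<and>
        vt = - c1v * exp (- c2v * D / vb) * (exp (\<sigma> * t) * \<phi> D)"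
  proof (intro allI impI exI conjI)
    fix t :: real
    show "((\<lambda>s. exp (\<sigma> * s) * \<psi> D) has_real_derivative (exp (\<sigma> * t) * \<sigma> * \<psi> D)) (at t within {0..})"
      by (auto intro!: derivative_eq_intros)
    show "exp (\<sigma> * t) * \<sigma> * \<psi> D = - c1v * exp (- c2v * D / vb) * (exp (\<sigma> * t) * \<phi> D)"
      using arg_cong[OF bD, of "\<lambda>u. exp (\<sigma> * t) * u"] by (simp add: algebra_simps)
  qed
  have h4: "\<forall>x\<in>{0<..<D}. \<forall>t\<ge>0. \<exists>zt zx vt vx.
        ((\<lambda>s. exp (\<sigma> * s) * \<phi> x) has_real_derivative zt) (at t within {0..}) \<and>
        ((\<lambda>y. exp (\<sigma> * t) * \<phi> y) has_real_derivative zx) (at x) \<and>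
        ((\<lambda>s. exp (\<sigma> * s) * \<psi> x) has_real_derivative vt) (at t within {0..}) \<and>
        ((\<lambda>y. exp (\<sigma> * t) * \<psi> y) has_real_derivative vx) (at x) \<and>
        zt + vb * zx = 0 \<and>
        vt - c4v * vx = - c1v * exp (- c2v * x / vb) * (exp (\<sigma> * t) * \<phi> x)"
  proof (intro ballI allI impI)
    fix x t :: real
    show "\<exists>zt zx vt vx.
        ((\<lambda>s. exp (\<sigma> * s) * \<phi> x) has_real_derivative zt) (at t within {0..}) \<and>
        ((\<lambda>y. exp (\<sigma> * t) * \<phi> y) has_real_derivative zx) (at x) \<and>
        ((\<lambda>s. exp (\<sigma> * s) * \<psi> x) has_real_derivative vt) (at t within {0..}) \<and>
        ((\<lambda>y. exp (\<sigma> * t) * \<psi> y) has_real_derivative vx) (at x) \<and>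
        zt + vb * zx = 0 \<and>
        vt - c4v * vx = - c1v * exp (- c2v * x / vb) * (exp (\<sigma> * t) * \<phi> x)"
    proof (intro exI conjI)
      show "((\<lambda>s. exp (\<sigma> * s) * \<phi> x) has_real_derivative (exp (\<sigma> * t) * \<sigma> * \<phi> x)) (at t within {0..})"
        by (auto intro!: derivative_eq_intros)
      show "((\<lambda>y. exp (\<sigma> * t) * \<phi> y) has_real_derivative (exp (\<sigma> * t) * (- \<sigma> / vb * \<phi> x))) (at x)"
        unfolding \<phi>_def using vb by (auto intro!: derivative_eq_intros)
      show "((\<lambda>s. exp (\<sigma> * s) * \<psi> x) has_real_derivative (exp (\<sigma> * t) * \<sigma> * \<psi> x)) (at t within {0..})"
        by (auto intro!: derivative_eq_intros)
      show "((\<lambda>y. exp (\<sigma> * t) * \<psi> y) has_real_derivative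
          (exp (\<sigma> * t) * (- k * B * exp (- k * x) + \<sigma> / c4v * C * exp (\<sigma> * x / c4v)))) (at x)"
        unfolding \<psi>_def using c4 by (auto intro!: derivative_eq_intros)
      show "exp (\<sigma> * t) * \<sigma> * \<phi> x + vb * (exp (\<sigma> * t) * (- \<sigma> / vb * \<phi> x)) = 0"
        using vb by (simp add: field_simps)
      have "\<sigma> * \<psi> x - c4v * (- k * B * exp (- k * x) + \<sigma> / c4v * C * exp (\<sigma> * x / c4v))
          = (\<sigma> + c4v * k) * B * exp (- k * x)"
        using c4 by (simp add: \<psi>_def field_simps)
      also have "\<dots> = - c1v * exp (- k * x)" using den by (simp add: B_def)
      also have "\<dots> = - c1v * exp (- c2v * x / vb) * \<phi> x" using ek[of x] by (simp add: \<phi>_def)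
      finally have e: "\<sigma> * \<psi> x - c4v * (- k * B * exp (- k * x) + \<sigma> / c4v * C * exp (\<sigma> * x / c4v))
          = - c1v * exp (- c2v * x / vb) * \<phi> x" .
      show "exp (\<sigma> * t) * \<sigma> * \<psi> x - c4v * (exp (\<sigma> * t) * (- k * B * exp (- k * x) + \<sigma> / c4v * C * exp (\<sigma> * x / c4v)))
          = - c1v * exp (- c2v * x / vb) * (exp (\<sigma> * t) * \<phi> x)"
        using arg_cong[OF e, of "\<lambda>u. exp (\<sigma> * t) * u"] by (simp add: algebra_simps)
    qed
  qed
  show ?thesis
    apply (rule exI[of _ \<sigma>], rule conjI[OF sp])
    apply (rule exI[of _ \<phi>], rule exI[of _ \<psi>])
    using h1 h2 h3 h4 h5 h6 by blast
qed

theorem proposition1: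
  fixes L D \<alpha> \<tau>acc \<tau>m hm hacc qin :: real
  assumes "L > 0" and "D > 0" and "0 \<le> \<alpha>" and "\<alpha> \<le> 1"
    and "\<tau>acc > 0" and "\<tau>m > 0" and "hm > 0" and "hacc > 0"
    and "qin > 0" and "qin * h_mix \<alpha> \<tau>acc \<tau>m hm hacc < 1"
  defines "tmix \<equiv> tau_mix \<alpha> \<tau>acc \<tau>m"
    and "hmx \<equiv> h_mix \<alpha> \<tau>acc \<tau>m hm hacc"
    and "vb \<equiv> v_bar L qin (h_mix \<alpha> \<tau>acc \<tau>m hm hacc)"
    and "rb \<equiv> rho_bar qin (v_bar L qin (h_mix \<alpha> \<tau>acc \<tau>m hm hacc))"
  shows "\<exists>\<sigma>::real. \<sigma> > 0 \<and> (\<exists>\<phi> \<psi> :: real \<Rightarrow> real.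
     (\<exists>x\<in>{0..D}. \<phi> x \<noteq> 0 \<or> \<psi> x \<noteq> 0) \<and>
     continuous_on {0..D} \<phi> \<and> continuous_on {0..D} \<psi> \<and>
     (\<forall>x\<in>{0<..<D}. \<forall>t\<ge>0. \<exists>zt zx vt vx.
        ((\<lambda>s. exp (\<sigma> * s) * \<phi> x) has_real_derivative zt) (at t within {0..}) \<and>
        ((\<lambda>y. exp (\<sigma> * t) * \<phi> y) has_real_derivative zx) (at x) \<and>
        ((\<lambda>s. exp (\<sigma> * s) * \<psi> x) has_real_derivative vt) (at t within {0..}) \<and>
        ((\<lambda>y. exp (\<sigma> * t) * \<psi> y) has_real_derivative vx) (at x) \<and>
        zt + vb * zx = 0 \<and>
        vt - c4 L hmx * vx = - c1 rb tmix hmx * exp (- c2 tmix * x / vb) * (exp (\<sigma> * t) * \<phi> x)) \<and>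
     (\<forall>t\<ge>0. exp (\<sigma> * t) * \<phi> 0 = - L * rb ^ 2 / vb * (exp (\<sigma> * t) * \<psi> 0)) \<and>
     (\<forall>t\<ge>0. \<exists>vt.
        ((\<lambda>s. exp (\<sigma> * s) * \<psi> D) has_real_derivative vt) (at t within {0..}) \<and>
        vt = - c1 rb tmix hmx * exp (- c2 tmix * D / vb) * (exp (\<sigma> * t) * \<phi> D)))"
proof -
  have pos3: "0 < a + (1 - a) * b" if "0 \<le> a" "a \<le> 1" "b > 0" for a b :: real
  proof (cases "a = 0")
    case True thus ?thesis using that by simp
  next
    case False hence "a > 0" using that by simp
    moreover have "(1 - a) * b \<ge> 0" using that by simp
    ultimately show ?thesis by linarith
  qed
  have N: "0 < \<alpha> + (1 - \<alpha>) * (\<tau>acc / \<tau>m)" by (rule pos3) (use assms in auto)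
  have Dn: "0 < \<alpha> + (1 - \<alpha>) * (\<tau>acc / \<tau>m * (hacc / hm))" by (rule pos3) (use assms in auto)
  have hpos: "hmx > 0" unfolding hmx_def h_mix_def using N Dn assms
    by (simp add: mult.assoc)
  have tpos: "tmix > 0"
  proof -
    have "0 < \<alpha> / \<tau>acc + (1 - \<alpha>) / \<tau>m"
    proof (cases "\<alpha> = 0")
      case True thus ?thesis using assms by simp
    next
      case False hence "\<alpha> / \<tau>acc > 0" using assms by simp
      moreover have "(1 - \<alpha>) / \<tau>m \<ge> 0" using assms by simp
      ultimately show ?thesis by linarith
    qed
    thus ?thesis unfolding tmix_def tau_mix_def by simp
  qed
  have "hmx < 1 / qin" using assms(9,10) unfolding hmx_def by (simp add: less_divide_eq mult.commute)
  hence vbpos: "vb > 0" unfolding vb_def v_bar_def hmx_def[symmetric] using assms(1) by simp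
  have rbpos: "rb > 0" unfolding rb_def rho_bar_def vb_def[symmetric] using vbpos assms(9) by simp
  have c1pos: "c1 rb tmix hmx > 0" unfolding c1_def using rbpos tpos hpos by simp
  have c2pos: "c2 tmix > 0" unfolding c2_def using tpos by simp
  have c4pos: "c4 L hmx > 0" unfolding c4_def using hpos assms(1) by simp
  show ?thesis
    using abstract_sol[OF assms(1) assms(2) rbpos vbpos c1pos c2pos c4pos] by simp
qed

end
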